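(* Let $\kappa_{\mathrm{charge}(3)}$ denote the growth rate of the charge(3) model and $\kappa_{Q\text{-charge}}$ the growth rate of the $Q$-charge model on the square lattice, as defined in the context. Then $\kappa_{\mathrm{charge}(3)} = \kappa_{Q\text{-charge}}$.
   Context: Work on the finite square lattice $[1,N]^2\subset\mathbb{Z}^2$, whose $N^2$ vertices carry spins $\oplus=+1$ or $\ominus=-1$. A spin configuration satisfies the charge(3) constraint if for every horizontal or vertical segment of consecutive vertices, the sum of the spins along that segment lies between $-3$ and $+3$. Let $Z^{\mathrm{ch}}_N$ be the number of charge(3) configurations on $[1,N]^2$. The $Q$-charge model places states on the bonds of $[1,N]^2$, including boundary bonds (so every vertex has exactly four incident bonds: north, west, east, south). Each bond state is an integer in $\{0,1,2,3\}$. A labelling is valid if at every vertex with north bond state $a$, west bond state $b$, east bond state $c$ and south bond state $d$, one has $d-a=c-b=\pm 1$ (both differences equal to the same value $+1$ or $-1$). Let $Z^{Q}_N$ be the number of valid $Q$-charge labellings. (Intuitively, the state of a horizontal (resp. vertical) bond is the cumulative charge after reading the spin to its west (resp. north), so a charge(3) configuration maps to one or more $Q$-charge configurations.) The growth rate of a model is $\kappa=\lim_{N\to\infty} Z_N^{1/N^2}$, where $Z_N$ is its number of valid configurations on $[1,N]^2$ (these limits are taken to exist). *)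

theory Defs
  imports Complex_Main "HOL-Library.FuncSet"
begin

text \<open>Vertices of [1,N]^2: pairs (i,j), i = row (increasing southwards), j = column
  (increasing eastwards).\<close>
definition grid :: "nat \<Rightarrow> (nat \<times> nat) set" where
  "grid N = {1..N} \<times> {1..N}"

definition charge3 :: "nat \<Rightarrow> (nat \<times> nat \<Rightarrow> int) \<Rightarrow> bool" where
  "charge3 N \<sigma> \<longleftrightarrow>
     (\<forall>i\<in>{1..N}. \<forall>j1 j2. 1 \<le> j1 \<and> j1 \<le> j2 \<and> j2 \<le> N \<longrightarrow>
        \<bar>\<Sum>j=j1..j2. \<sigma> (i, j)\<bar> \<le> 3) \<and>
     (\<forall>j\<in>{1..N}. \<forall>i1 i2. 1 \<le> i1 \<and> i1 \<le> i2 \<and> i2 \<le> N \<longrightarrow>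
        \<bar>\<Sum>i=i1..i2. \<sigma> (i, j)\<bar> \<le> 3)"

definition Zch :: "nat \<Rightarrow> nat" where
  "Zch N = card {\<sigma> \<in> grid N \<rightarrow>\<^sub>E {1, -1::int}. charge3 N \<sigma>}"

text \<open>Horizontal bond (i,j), i \<in> [1,N], j \<in> [0,N], joins vertex (i,j) to (i,j+1)
  (j = 0 and j = N are the west/east boundary bonds). Vertical bond (i,j), i \<in> [0,N],
  j \<in> [1,N], joins vertex (i,j) to (i+1,j) (i = 0, i = N are north/south boundary bonds).
  So vertex (i,j) has north bond v(i-1,j), south bond v(i,j), west bond h(i,j-1),
  east bond h(i,j).\<close>
definition hbonds :: "nat \<Rightarrow> (nat \<times> nat) set" where
  "hbonds N = {1..N} \<times> {0..N}"

definition vbonds :: "nat \<Rightarrow> (nat \<times> nat) set" where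
  "vbonds N = {0..N} \<times> {1..N}"

definition qvalid :: "nat \<Rightarrow> (nat \<times> nat \<Rightarrow> int) \<Rightarrow> (nat \<times> nat \<Rightarrow> int) \<Rightarrow> bool" where
  "qvalid N h v \<longleftrightarrow>
     (\<forall>(i, j)\<in>grid N.
        let a = v (i - 1, j); b = h (i, j - 1); c = h (i, j); d = v (i, j)
        in d - a = c - b \<and> (d - a = 1 \<or> d - a = -1))"

definition ZQ :: "nat \<Rightarrow> nat" where
  "ZQ N = card {(h, v). h \<in> hbonds N \<rightarrow>\<^sub>E {0..3::int} \<and> v \<in> vbonds N \<rightarrow>\<^sub>E {0..3::int}
                        \<and> qvalid N h v}"

end

theory Submission
  imports Defs "HOL-Real_Asymp.Real_Asymp"
begin

definition sig :: "nat \<Rightarrow> (nat\<times>nat \<Rightarrow> int) \<Rightarrow> (nat\<times>nat \<Rightarrow> int) \<Rightarrow> (nat\<times>nat \<Rightarrow> int)" where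
  "sig N h v = (\<lambda>p\<in>grid N. v p - v (fst p - 1, snd p))"

definition QS :: "nat \<Rightarrow> ((nat\<times>nat \<Rightarrow> int) \<times> (nat\<times>nat \<Rightarrow> int)) set" where
  "QS N = {(h, v). h \<in> hbonds N \<rightarrow>\<^sub>E {0..3::int} \<and> v \<in> vbonds N \<rightarrow>\<^sub>E {0..3::int}
                        \<and> qvalid N h v}"

definition CS :: "nat \<Rightarrow> (nat\<times>nat \<Rightarrow> int) set" where
  "CS N = {\<sigma> \<in> grid N \<rightarrow>\<^sub>E {1, -1::int}. charge3 N \<sigma>}"

lemma tele:
  fixes f :: "nat \<Rightarrow> int"
  assumes "1 \<le> a" "a \<le> b"
  shows "(\<Sum>k=a..b. f k - f (k-1)) = f b - f (a-1)"
  using assms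
proof (induction b)
  case 0 then show ?case by simp
next
  case (Suc b)
  show ?case
  proof (cases "a = Suc b")
    case True then show ?thesis by simp
  next
    case False
    then have "a \<le> b" using Suc by simp
    then show ?thesis using Suc by (simp add: sum.cl_ivl_Suc)
  qed
qed

lemma split1:
  fixes g :: "nat \<Rightarrow> int"
  assumes "a \<le> b"
  shows "sum g {1..b} = sum g {1..a} + sum g {Suc a..b}"
  using assms
proof (induction b)
  case 0 then show ?case by simp
next
  case (Suc b)
  show ?case
  proof (cases "a = Suc b")
    case True then show ?thesis by simp
  next
    case False
    then have "a \<le> b" using Suc by simp
    then show ?thesis using Suc by (simp add: sum.cl_ivl_Suc)
  qed
qed

lemma rowdiff:
  fixes g :: "nat \<Rightarrow> int"
  assumes seg: "\<forall>a b. 1 \<le> a \<and> a \<le> b \<and> b \<le> N \<longrightarrow> \<bar>sum g {a..b}\<bar> \<le> 3"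
    and "j \<le> N" "j' \<le> N"
  shows "sum g {1..j} - sum g {1..j'} \<le> 3"
proof (cases "j' < j")
  case True
  have "sum g {1..j} - sum g {1..j'} = sum g {Suc j'..j}" using split1[of j' j g] True by simp
  moreover have "\<bar>sum g {Suc j'..j}\<bar> \<le> 3" using seg assms True by auto
  ultimately show ?thesis by simp
next
  case False
  show ?thesis
  proof (cases "j = j'")
    case True then show ?thesis by simp
  next
    case False2: False
    then have jj: "j < j'" using False by simp
    have "sum g {1..j} - sum g {1..j'} = - sum g {Suc j..j'}" using split1[of j j' g] jj by simp
    moreover have "\<bar>sum g {Suc j..j'}\<bar> \<le> 3" using seg assms jj by auto
    ultimately show ?thesis by simp
  qed
qed

lemma rowrange:
  fixes g :: "nat \<Rightarrow> int"
  assumes seg: "\<forall>a b. 1 \<le> a \<and> a \<le> b \<and> b \<le> N \<longrightarrow> \<bar>sum g {a..b}\<bar> \<le> 3"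
    and "j \<le> N"
  shows "sum g {1..j} - Min ((\<lambda>j. sum g {1..j}) ` {0..N}) \<in> {0..3}"
proof -
  let ?S = "(\<lambda>j. sum g {1..j}) ` {0..N}"
  have fin: "finite ?S" "?S \<noteq> {}" by auto
  have "Min ?S \<in> ?S" using Min_in[OF fin] .
  then obtain j' where j': "j' \<le> N" "Min ?S = sum g {1..j'}" by (auto simp del: Min_in)
  have "Min ?S \<le> sum g {1..j}" using fin assms by (intro Min_le) auto
  moreover have "sum g {1..j} - sum g {1..j'} \<le> 3" using rowdiff[OF seg assms(2) j'(1)] .
  ultimately show ?thesis using j' by simp
qed

lemma qv_at:
  assumes "(h, v) \<in> QS N" "(i, j) \<in> grid N"
  shows "h (i, j) = h (i, j-1) + sig N h v (i, j)" "v (i, j) = v (i-1, j) + sig N h v (i, j)"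
    "sig N h v (i, j) = 1 \<or> sig N h v (i, j) = -1"
  using assms unfolding QS_def qvalid_def sig_def by (fastforce simp: Let_def)+

lemma sig_in:
  assumes q: "(h, v) \<in> QS N"
  shows "sig N h v \<in> CS N"
proof -
  have hr: "h p \<in> {0..3}" if "p \<in> hbonds N" for p using q that unfolding QS_def by auto
  have vr: "v p \<in> {0..3}" if "p \<in> vbonds N" for p using q that unfolding QS_def by auto
  have pie: "sig N h v \<in> grid N \<rightarrow>\<^sub>E {1, -1}"
  proof
    fix p assume "p \<in> grid N"
    then obtain i j where p: "p = (i,j)" "(i,j) \<in> grid N" by (cases p) auto
    show "sig N h v p \<in> {1, -1}" using qv_at(3)[OF q p(2)] p by auto
  next
    fix p assume "p \<notin> grid N" then show "sig N h v p = undefined" unfolding sig_def by simp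
  qed
  have rows: "\<bar>\<Sum>j=j1..j2. sig N h v (i, j)\<bar> \<le> 3"
    if "i \<in> {1..N}" "1 \<le> j1 \<and> j1 \<le> j2 \<and> j2 \<le> N" for i j1 j2
  proof -
    have "(\<Sum>j=j1..j2. sig N h v (i, j)) = (\<Sum>j=j1..j2. h (i,j) - h (i, j-1))"
    proof (rule sum.cong)
      fix j assume "j \<in> {j1..j2}"
      then have "(i,j) \<in> grid N" using that unfolding grid_def by auto
      then show "sig N h v (i, j) = h (i,j) - h (i, j-1)" using qv_at(1)[OF q] by simp
    qed simp
    also have "\<dots> = h (i, j2) - h (i, j1 - 1)" using tele[of j1 j2 "\<lambda>k. h (i,k)"] that by simp
    finally have e: "(\<Sum>j=j1..j2. sig N h v (i, j)) = h (i, j2) - h (i, j1 - 1)" .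
    have "(i,j2) \<in> hbonds N" "(i,j1-1) \<in> hbonds N" using that unfolding hbonds_def by auto
    then have "h (i,j2) \<in> {0..3}" "h (i,j1-1) \<in> {0..3}" using hr by auto
    then show ?thesis unfolding e by auto
  qed
  have cols: "\<bar>\<Sum>i=i1..i2. sig N h v (i, j)\<bar> \<le> 3"
    if "j \<in> {1..N}" "1 \<le> i1 \<and> i1 \<le> i2 \<and> i2 \<le> N" for j i1 i2
  proof -
    have "(\<Sum>i=i1..i2. sig N h v (i, j)) = (\<Sum>i=i1..i2. v (i,j) - v (i-1, j))"
    proof (rule sum.cong)
      fix i assume "i \<in> {i1..i2}"
      then have "(i,j) \<in> grid N" using that unfolding grid_def by auto
      then show "sig N h v (i, j) = v (i,j) - v (i-1, j)" using qv_at(2)[OF q] by simp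
    qed simp
    also have "\<dots> = v (i2, j) - v (i1 - 1, j)" using tele[of i1 i2 "\<lambda>k. v (k,j)"] that by simp
    finally have e: "(\<Sum>i=i1..i2. sig N h v (i, j)) = v (i2, j) - v (i1 - 1, j)" .
    have "(i2,j) \<in> vbonds N" "(i1-1,j) \<in> vbonds N" using that unfolding vbonds_def by auto
    then have "v (i2,j) \<in> {0..3}" "v (i1-1,j) \<in> {0..3}" using vr by auto
    then show ?thesis unfolding e by auto
  qed
  show ?thesis unfolding CS_def charge3_def using pie rows cols by blast
qed



lemma inj_F:
  "inj_on (\<lambda>(h,v). (sig N h v, restrict (\<lambda>i. h(i,0)) {1..N}, restrict (\<lambda>j. v(0,j)) {1..N})) (QS N)"
proof (rule inj_onI)
  fix x y assume x: "x \<in> QS N" and y: "y \<in> QS N"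
    and e: "(\<lambda>(h,v). (sig N h v, restrict (\<lambda>i. h(i,0)) {1..N}, restrict (\<lambda>j. v(0,j)) {1..N})) x =
            (\<lambda>(h,v). (sig N h v, restrict (\<lambda>i. h(i,0)) {1..N}, restrict (\<lambda>j. v(0,j)) {1..N})) y"
  obtain h v where xh: "x = (h,v)" by (cases x)
  obtain h' v' where yh: "y = (h',v')" by (cases y)
  have q: "(h, v) \<in> QS N" and q': "(h', v') \<in> QS N" using x y xh yh by simp_all
  have s: "sig N h v = sig N h' v'"
    and r1: "restrict (\<lambda>i. h(i,0)) {1..N} = restrict (\<lambda>i. h'(i,0)) {1..N}"
    and r2: "restrict (\<lambda>j. v(0,j)) {1..N} = restrict (\<lambda>j. v'(0,j)) {1..N}"
    using e unfolding xh yh by (simp_all only: prod.case prod.inject)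
  have hp: "h \<in> hbonds N \<rightarrow>\<^sub>E {0..3}" "h' \<in> hbonds N \<rightarrow>\<^sub>E {0..3}"
    "v \<in> vbonds N \<rightarrow>\<^sub>E {0..3}" "v' \<in> vbonds N \<rightarrow>\<^sub>E {0..3}" using q q' unfolding QS_def by auto
  have H: "h (i,j) = h' (i,j)" if "i \<in> {1..N}" "j \<le> N" for i j
    using that(2)
  proof (induction j)
    case 0 then show ?case using fun_cong[OF r1, of i] that(1) by simp
  next
    case (Suc j)
    have g: "(i, Suc j) \<in> grid N" using Suc that unfolding grid_def by auto
    show ?case using qv_at(1)[OF q g] qv_at(1)[OF q' g] Suc s by simp
  qed
  have V: "v (i,j) = v' (i,j)" if "j \<in> {1..N}" "i \<le> N" for i j
    using that(2)
  proof (induction i)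
    case 0 then show ?case using fun_cong[OF r2, of j] that(1) by simp
  next
    case (Suc i)
    have g: "(Suc i, j) \<in> grid N" using Suc that unfolding grid_def by auto
    show ?case using qv_at(2)[OF q g] qv_at(2)[OF q' g] Suc s by simp
  qed
  have hh: "h = h'"
  proof
    fix p show "h p = h' p"
    proof (cases "p \<in> hbonds N")
      case True
      then obtain i j where p: "p = (i,j)" "i \<in> {1..N}" "j \<le> N" unfolding hbonds_def by auto
      show ?thesis unfolding p(1) by (rule H[OF p(2) p(3)])
    next
      case False then show ?thesis using PiE_arb[OF hp(1) False] PiE_arb[OF hp(2) False] by simp
    qed
  qed
  have vv: "v = v'"
  proof
    fix p show "v p = v' p"
    proof (cases "p \<in> vbonds N")
      case True
      then obtain i j where p: "p = (i,j)" "j \<in> {1..N}" "i \<le> N" unfolding vbonds_def by auto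
      show ?thesis unfolding p(1) by (rule V[OF p(2) p(3)])
    next
      case False then show ?thesis using PiE_arb[OF hp(3) False] PiE_arb[OF hp(4) False] by simp
    qed
  qed
  show "x = y" unfolding xh yh hh vv ..
qed

lemma surj_sig:
  assumes c: "\<sigma> \<in> CS N"
  shows "\<exists>h v. (h, v) \<in> QS N \<and> sig N h v = \<sigma>"
proof -
  have pie: "\<sigma> \<in> grid N \<rightarrow>\<^sub>E {1, -1}" and ch: "charge3 N \<sigma>" using c unfolding CS_def by auto
  define P where "P i j = (\<Sum>k=1..j. \<sigma> (i,k))" for i j
  define m where "m i = Min ((\<lambda>j. \<Sum>k=1..j. \<sigma> (i,k)) ` {0..N})" for i
  define C where "C i j = (\<Sum>k=1..i. \<sigma> (k,j))" for i j
  define n where "n j = Min ((\<lambda>i. \<Sum>k=1..i. \<sigma> (k,j)) ` {0..N})" for j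
  define h where "h = restrict (\<lambda>p. P (fst p) (snd p) - m (fst p)) (hbonds N)"
  define v where "v = restrict (\<lambda>p. C (fst p) (snd p) - n (snd p)) (vbonds N)"
  have hin: "h \<in> hbonds N \<rightarrow>\<^sub>E {0..3}"
  proof
    fix p assume p: "p \<in> hbonds N"
    then obtain i j where ij: "p = (i,j)" "i \<in> {1..N}" "j \<le> N" unfolding hbonds_def by auto
    have seg: "\<forall>a b. 1 \<le> a \<and> a \<le> b \<and> b \<le> N \<longrightarrow> \<bar>sum (\<lambda>k. \<sigma> (i,k)) {a..b}\<bar> \<le> 3"
      using ch ij(2) unfolding charge3_def by blast
    show "h p \<in> {0..3}" using rowrange[OF seg ij(3)] p ij unfolding h_def P_def m_def by simp
  next
    fix p assume "p \<notin> hbonds N" then show "h p = undefined" unfolding h_def by simp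
  qed
  have vin: "v \<in> vbonds N \<rightarrow>\<^sub>E {0..3}"
  proof
    fix p assume p: "p \<in> vbonds N"
    then obtain i j where ij: "p = (i,j)" "j \<in> {1..N}" "i \<le> N" unfolding vbonds_def by auto
    have seg: "\<forall>a b. 1 \<le> a \<and> a \<le> b \<and> b \<le> N \<longrightarrow> \<bar>sum (\<lambda>k. \<sigma> (k,j)) {a..b}\<bar> \<le> 3"
      using ch ij(2) unfolding charge3_def by blast
    show "v p \<in> {0..3}" using rowrange[OF seg ij(3)] p ij unfolding v_def C_def n_def by simp
  next
    fix p assume "p \<notin> vbonds N" then show "v p = undefined" unfolding v_def by simp
  qed
  have dh: "h (i,j) - h (i,j-1) = \<sigma> (i,j)" and dv: "v (i,j) - v (i-1,j) = \<sigma> (i,j)"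
    if "(i,j) \<in> grid N" for i j
  proof -
    have ij: "1 \<le> i" "i \<le> N" "1 \<le> j" "j \<le> N" using that unfolding grid_def by auto
    have "(i,j) \<in> hbonds N" "(i,j-1) \<in> hbonds N" "(i,j) \<in> vbonds N" "(i-1,j) \<in> vbonds N"
      using ij unfolding hbonds_def vbonds_def by auto
    moreover have "P i j = P i (j-1) + \<sigma> (i,j)"
      using ij unfolding P_def by (cases j) (auto simp: sum.cl_ivl_Suc)
    moreover have "C i j = C (i-1) j + \<sigma> (i,j)"
      using ij unfolding C_def by (cases i) (auto simp: sum.cl_ivl_Suc)
    ultimately show "h (i,j) - h (i,j-1) = \<sigma> (i,j)" "v (i,j) - v (i-1,j) = \<sigma> (i,j)"
      unfolding h_def v_def by auto
  qed
  have qv: "qvalid N h v"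
    unfolding qvalid_def
  proof (clarify, unfold Let_def)
    fix i j assume g: "(i,j) \<in> grid N"
    have "\<sigma> (i,j) \<in> {1,-1}" using pie g by auto
    then show "v (i, j) - v (i - 1, j) = h (i, j) - h (i, j - 1) \<and>
       (v (i, j) - v (i - 1, j) = 1 \<or> v (i, j) - v (i - 1, j) = - 1)"
      using dh[OF g] dv[OF g] by auto
  qed
  have "sig N h v = \<sigma>"
  proof
    fix p show "sig N h v p = \<sigma> p"
    proof (cases "p \<in> grid N")
      case True
      then obtain i j where "p = (i,j)" by (cases p) auto
      then show ?thesis using dv True unfolding sig_def by auto
    next
      case False then show ?thesis using PiE_arb[OF pie False] False unfolding sig_def by simp
    qed
  qed
  then show ?thesis using hin vin qv unfolding QS_def by blast
qed

lemma finite_QS: "finite (QS N)"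
proof -
  have "QS N \<subseteq> (hbonds N \<rightarrow>\<^sub>E {0..3}) \<times> (vbonds N \<rightarrow>\<^sub>E {0..3})" unfolding QS_def by auto
  moreover have "finite ((hbonds N \<rightarrow>\<^sub>E {0..3::int}) \<times> (vbonds N \<rightarrow>\<^sub>E {0..3::int}))"
    unfolding hbonds_def vbonds_def by (intro finite_cartesian_product finite_PiE) auto
  ultimately show ?thesis by (rule finite_subset)
qed

lemma card_lower: "Zch N \<le> ZQ N"
proof -
  have e1: "Zch N = card (CS N)" unfolding Zch_def CS_def by simp
  have e2: "ZQ N = card (QS N)" unfolding ZQ_def QS_def by simp
  have "CS N \<subseteq> (\<lambda>(h,v). sig N h v) ` QS N" using surj_sig by force
  then have "card (CS N) \<le> card ((\<lambda>(h,v). sig N h v) ` QS N)"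
    using finite_QS by (intro card_mono) auto
  also have "\<dots> \<le> card (QS N)" using finite_QS by (rule card_image_le)
  finally show ?thesis using e1 e2 by simp
qed

lemma card_upper: "ZQ N \<le> 16 ^ N * Zch N"
proof -
  have e1: "Zch N = card (CS N)" unfolding Zch_def CS_def by simp
  have e2: "ZQ N = card (QS N)" unfolding ZQ_def QS_def by simp
  let ?T = "CS N \<times> (({1..N} \<rightarrow>\<^sub>E {0..3::int}) \<times> ({1..N} \<rightarrow>\<^sub>E {0..3::int}))"
  let ?F = "(\<lambda>(h,v). (sig N h v, restrict (\<lambda>i. h(i,0)) {1..N}, restrict (\<lambda>j. v(0,j)) {1..N}))"
  have finCS: "finite (CS N)"
  proof -
    have "CS N \<subseteq> grid N \<rightarrow>\<^sub>E {1,-1::int}" unfolding CS_def by auto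
    moreover have "finite (grid N \<rightarrow>\<^sub>E {1,-1::int})" unfolding grid_def by (intro finite_PiE) auto
    ultimately show ?thesis by (rule finite_subset)
  qed
  have sub: "?F ` QS N \<subseteq> ?T"
  proof
    fix x assume "x \<in> ?F ` QS N"
    then obtain p where p: "p \<in> QS N" "x = ?F p" by blast
    obtain h v where hv: "p = (h,v)" by (cases p)
    have q: "(h,v) \<in> QS N" and x: "x = ?F (h,v)" using p hv by auto
    have "h \<in> hbonds N \<rightarrow>\<^sub>E {0..3}" "v \<in> vbonds N \<rightarrow>\<^sub>E {0..3}" using q unfolding QS_def by auto
    then have a: "restrict (\<lambda>i. h(i,0)) {1..N} \<in> {1..N} \<rightarrow>\<^sub>E {0..3}"
         and b: "restrict (\<lambda>j. v(0,j)) {1..N} \<in> {1..N} \<rightarrow>\<^sub>E {0..3}"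
      unfolding hbonds_def vbonds_def by auto
    show "x \<in> ?T" unfolding x using sig_in[OF q] a b by (simp only: mem_Times_iff prod.case fst_conv snd_conv)
  qed
  have finT: "finite ?T" using finCS by (intro finite_cartesian_product finite_PiE) auto
  have "card (QS N) \<le> card ?T" using card_inj_on_le[OF inj_F sub finT] .
  also have "card ?T = card (CS N) * (4 ^ N * 4 ^ N)"
    by (simp add: card_cartesian_product card_PiE)
  also have "\<dots> = 16 ^ N * card (CS N)"
    by (simp add: power_mult_distrib[symmetric])
  finally show ?thesis using e1 e2 by simp
qed

theorem mainTheorem1:
  fixes \<kappa>ch \<kappa>Q :: real
  assumes "(\<lambda>N. real (Zch N) powr (1 / real (N ^ 2))) \<longlonglongrightarrow> \<kappa>ch"
      and "(\<lambda>N. real (ZQ N) powr (1 / real (N ^ 2))) \<longlonglongrightarrow> \<kappa>Q"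
  shows "\<kappa>ch = \<kappa>Q"
proof -
  have lim16: "(\<lambda>N. (16::real) powr (1 / real N)) \<longlonglongrightarrow> 1" by real_asymp
  have le1: "real (Zch N) powr (1 / real (N ^ 2)) \<le> real (ZQ N) powr (1 / real (N ^ 2))" for N
    using card_lower[of N] by (intro powr_mono2) auto
  have le2: "real (ZQ N) powr (1 / real (N ^ 2)) \<le> 16 powr (1 / real N) * real (Zch N) powr (1 / real (N ^ 2))"
    if "N \<ge> 1" for N
  proof -
    have "real (ZQ N) powr (1 / real (N ^ 2)) \<le> (16 ^ N * real (Zch N)) powr (1 / real (N ^ 2))"
    proof (rule powr_mono2)
      have "real (ZQ N) \<le> real (16 ^ N * Zch N)" using card_upper[of N] by (simp only: of_nat_le_iff)
      then show "real (ZQ N) \<le> 16 ^ N * real (Zch N)" by simp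
    qed auto
    also have "\<dots> = (16 ^ N) powr (1 / real (N ^ 2)) * real (Zch N) powr (1 / real (N ^ 2))"
      by (rule powr_mult)
    also have "(16 ^ N :: real) = 16 powr real N" by (simp add: powr_realpow)
    also have "(16 powr real N) powr (1 / real (N ^ 2)) = (16::real) powr (1 / real N)"
      using that by (simp add: powr_powr power2_eq_square)
    finally show ?thesis .
  qed
  have "\<kappa>ch \<le> \<kappa>Q"
    by (rule LIMSEQ_le[OF assms(1) assms(2)]) (intro exI[of _ 0] allI impI le1)
  moreover have "\<kappa>Q \<le> 1 * \<kappa>ch"
  proof (rule LIMSEQ_le[OF assms(2) tendsto_mult[OF lim16 assms(1)]])
    show "\<exists>M. \<forall>n\<ge>M. real (ZQ n) powr (1 / real (n ^ 2)) \<le> 16 powr (1 / real n) * real (Zch n) powr (1 / real (n ^ 2))"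
      by (intro exI[of _ 1] allI impI le2)
  qed
  ultimately show ?thesis by simp
qed

end
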